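(* For every positive integer $n$ there exists a rooted tree with at most $n^{1.894}$ nodes that contains every binary rooted tree on $n$ nodes as a topological minor. Consequently, binary rooted trees on $n$ nodes admit an NCA labeling scheme with labels of at most $\lceil 1.894\log_2 n\rceil$ bits.
   Context: Trees are rooted and unordered, with edges directed from parent to child. The degree of a node is its number of children. A tree is binary if every node has at most two children. A rooted tree $T$ is a topological minor of a rooted tree $U$ if there is an injective map $f$ from the nodes of $T$ to the nodes of $U$ with $f(\mathsf{NCA}(u,v))=\mathsf{NCA}(f(u),f(v))$ for all nodes $u,v$ of $T$. Here $\mathsf{NCA}$ denotes the nearest common ancestor. Equivalently, $U$ contains as a subgraph a subdivision of $T$ that respects the root/edge directions. An NCA labeling scheme for a class of trees consists of an encoder and a decoder. The encoder assigns distinct binary strings (labels) to the nodes of each tree in the class. The decoder, given only the labels of two nodes $u,v$ of the same tree, outputs the label of $\mathsf{NCA}(u,v)$. *)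

theory Defs
  imports Complex_Main
begin

text \<open>The children are stored in a list, but every notion below
  (node set, NCA, binarity, topological minor) is insensitive to child order, so this
  represents rooted unordered trees (up to isomorphism). Nodes are addressed by
  their positions: the root is [], and the i-th child of node p is p @ [i] (written as
  a path from the root).\<close>

datatype rtree = Node "rtree list"

primrec nodes :: "rtree \<Rightarrow> nat list set" where
  "nodes (Node ts) = insert [] (\<Union>i<length ts. (Cons i) ` (map nodes ts ! i))"

primrec binary :: "rtree \<Rightarrow> bool" where
  "binary (Node ts) = (length ts \<le> 2 \<and> list_all id (map binary ts))"

fun nca :: "nat list \<Rightarrow> nat list \<Rightarrow> nat list" where
  "nca (x # xs) (y # ys) = (if x = y then x # nca xs ys else [])"
| "nca _ _ = []"

definition top_minor :: "rtree \<Rightarrow> rtree \<Rightarrow> bool" where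
  "top_minor T U \<longleftrightarrow> (\<exists>f. inj_on f (nodes T) \<and> f ` nodes T \<subseteq> nodes U \<and>
      (\<forall>u\<in>nodes T. \<forall>v\<in>nodes T. f (nca u v) = nca (f u) (f v)))"

end

theory Submission
  imports Defs
begin


lemma nodes_Node: "nodes (Node ts) = insert [] (\<Union>i<length ts. (Cons i) ` nodes (ts ! i))"
  by simp

lemma finite_nodes: "finite (nodes T)"
proof (induction T)
  case (Node ts)
  have "\<forall>i<length ts. finite (nodes (ts ! i))" using Node by simp
  then show ?case by (simp del: nodes.simps add: nodes_Node)
qed

lemma card_nodes_Node: "card (nodes (Node ts)) = Suc (\<Sum>i<length ts. card (nodes (ts ! i)))"
proof -
  have fin: "\<forall>i\<in>{..<length ts}. finite (Cons i ` nodes (ts ! i))" by (simp add: finite_nodes)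
  have dis: "\<forall>i\<in>{..<length ts}. \<forall>j\<in>{..<length ts}. i \<noteq> j \<longrightarrow>
      Cons i ` nodes (ts ! i) \<inter> Cons j ` nodes (ts ! j) = {}" by auto
  have "card (\<Union>i<length ts. (Cons i) ` nodes (ts ! i)) = (\<Sum>i<length ts. card (Cons i ` nodes (ts ! i)))"
    by (rule card_UN_disjoint) (use fin dis in auto)
  also have "\<dots> = (\<Sum>i<length ts. card (nodes (ts ! i)))"
    by (rule sum.cong) (auto simp: card_image)
  finally have c: "card (\<Union>i<length ts. (Cons i) ` nodes (ts ! i)) = (\<Sum>i<length ts. card (nodes (ts ! i)))" .
  have "[] \<notin> (\<Union>i<length ts. (Cons i) ` nodes (ts ! i))" by auto
  moreover have "finite (\<Union>i<length ts. (Cons i) ` nodes (ts ! i))" using fin by auto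
  ultimately show ?thesis using c by (simp del: nodes.simps add: nodes_Node)
qed

lemma card_nodes_Node': "card (nodes (Node ts)) = Suc (\<Sum>t\<leftarrow>ts. card (nodes t))"
proof -
  have "(\<Sum>t\<leftarrow>ts. card (nodes t)) = (\<Sum>i<length ts. card (nodes (ts ! i)))"
    by (simp add: sum_list_sum_nth atLeast0LessThan)
  then show ?thesis by (simp only: card_nodes_Node)
qed

lemma card_nodes_pos: "card (nodes T) \<ge> 1"
proof -
  have "[] \<in> nodes T" by (cases T) simp
  then show ?thesis using finite_nodes by (metis One_nat_def Suc_leI card_gt_0_iff empty_iff)
qed

inductive emb :: "rtree \<Rightarrow> rtree \<Rightarrow> bool" where
  down: "i < length us \<Longrightarrow> emb T (us ! i) \<Longrightarrow> emb T (Node us)"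
| node: "inj_on g {..<length ts} \<Longrightarrow> (\<forall>i<length ts. g i < length us \<and> emb (ts ! i) (us ! g i))
          \<Longrightarrow> emb (Node ts) (Node us)"

lemma nca_Nil1[simp]: "nca [] v = []" by (cases v) auto
lemma nca_Nil2[simp]: "nca u [] = []" by (cases u) auto

lemma emb_top:
  assumes "emb T U"
  shows "\<exists>f. inj_on f (nodes T) \<and> f ` nodes T \<subseteq> nodes U \<and>
      (\<forall>u\<in>nodes T. \<forall>v\<in>nodes T. f (nca u v) = nca (f u) (f v))"
  using assms
proof (induction rule: emb.induct)
  case (down i us T)
  then obtain f where f: "inj_on f (nodes T)" "f ` nodes T \<subseteq> nodes (us ! i)"
    "\<forall>u\<in>nodes T. \<forall>v\<in>nodes T. f (nca u v) = nca (f u) (f v)" by blast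
  define f' where "f' = (\<lambda>p. i # f p)"
  have "inj_on f' (nodes T)" using f(1) unfolding f'_def inj_on_def by auto
  moreover have "f' ` nodes T \<subseteq> nodes (Node us)" using f(2) down(1) unfolding f'_def by auto
  moreover have "\<forall>u\<in>nodes T. \<forall>v\<in>nodes T. f' (nca u v) = nca (f' u) (f' v)"
    using f(3) unfolding f'_def by simp
  ultimately show ?case by blast
next
  case (node g ts us)
  then have "\<forall>i<length ts. \<exists>f. inj_on f (nodes (ts ! i)) \<and> f ` nodes (ts ! i) \<subseteq> nodes (us ! g i) \<and>
      (\<forall>u\<in>nodes (ts ! i). \<forall>v\<in>nodes (ts ! i). f (nca u v) = nca (f u) (f v))" by blast
  then obtain F where F: "\<forall>i<length ts. inj_on (F i) (nodes (ts ! i)) \<and> F i ` nodes (ts ! i) \<subseteq> nodes (us ! g i) \<and>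
      (\<forall>u\<in>nodes (ts ! i). \<forall>v\<in>nodes (ts ! i). F i (nca u v) = nca (F i u) (F i v))"
    by metis
  define f where "f = (\<lambda>p. case p of [] \<Rightarrow> [] | i # q \<Rightarrow> g i # F i q)"
  have f0: "f [] = []" and f1: "\<And>i q. f (i # q) = g i # F i q" unfolding f_def by auto
  have "inj_on f (nodes (Node ts))"
  proof (rule inj_onI)
    fix x y assume x: "x \<in> nodes (Node ts)" and y: "y \<in> nodes (Node ts)" and e: "f x = f y"
    show "x = y"
    proof (cases x)
      case Nil
      then show ?thesis using e y by (cases y) (auto simp: f0 f1)
    next
      case (Cons i p)
      then obtain j q where yq: "y = j # q" using e by (cases y) (auto simp: f0 f1)
      have ip: "i < length ts" "p \<in> nodes (ts ! i)" using x Cons by auto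
      have jq: "j < length ts" "q \<in> nodes (ts ! j)" using y yq by auto
      have "g i = g j" using e Cons yq by (simp add: f1)
      then have ij: "i = j" using node(1) ip jq unfolding inj_on_def by blast
      then have "F i p = F i q" using e Cons yq by (simp add: f1)
      then have "p = q" using F ip jq ij unfolding inj_on_def by blast
      then show ?thesis using Cons yq ij by simp
    qed
  qed
  moreover have "f ` nodes (Node ts) \<subseteq> nodes (Node us)"
  proof
    fix z assume "z \<in> f ` nodes (Node ts)"
    then obtain x where x: "x \<in> nodes (Node ts)" "z = f x" by blast
    show "z \<in> nodes (Node us)"
    proof (cases x)
      case Nil then show ?thesis using x by (simp add: f0)
    next
      case (Cons i p)
      have ip: "i < length ts" "p \<in> nodes (ts ! i)" using x Cons by auto
      then have "F i p \<in> nodes (us ! g i)" "g i < length us" using F node(2) by blast+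
      then show ?thesis using x Cons by (auto simp: f1)
    qed
  qed
  moreover have "\<forall>u\<in>nodes (Node ts). \<forall>v\<in>nodes (Node ts). f (nca u v) = nca (f u) (f v)"
  proof (intro ballI)
    fix u v assume u: "u \<in> nodes (Node ts)" and v: "v \<in> nodes (Node ts)"
    show "f (nca u v) = nca (f u) (f v)"
    proof (cases u)
      case Nil then show ?thesis by (simp add: f0)
    next
      case (Cons i p)
      show ?thesis
      proof (cases v)
        case Nil then show ?thesis by (simp add: f0)
      next
        case (Cons j q)
        have ip: "i < length ts" "p \<in> nodes (ts ! i)" using u \<open>u = i # p\<close> by auto
        have jq: "j < length ts" "q \<in> nodes (ts ! j)" using v Cons by auto
        show ?thesis
        proof (cases "i = j")
          case True
          then show ?thesis using F ip jq \<open>u = i # p\<close> Cons by (simp add: f1)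
        next
          case False
          then have "g i \<noteq> g j" using node(1) ip jq unfolding inj_on_def by blast
          then show ?thesis using False \<open>u = i # p\<close> Cons by (simp add: f0 f1)
        qed
      qed
    qed
  qed
  ultimately show ?case by blast
qed

lemma emb_two:
  assumes "emb A (us ! a)" "emb B (us ! b)" "a \<noteq> b" "a < length us" "b < length us"
  shows "emb (Node [A, B]) (Node us)"
proof (rule emb.node[where g = "\<lambda>i. if i = 0 then a else b"])
  show "inj_on (\<lambda>i. if i = 0 then a else b) {..<length [A, B]}"
    using assms(3) by (auto simp: inj_on_def)
  show "\<forall>i<length [A, B]. (if i = 0 then a else b) < length us \<and> emb ([A, B] ! i) (us ! (if i = 0 then a else b))"
    using assms by (auto simp: less_Suc_eq)
qed

lemma emb_one:
  assumes "emb A (us ! a)" "a < length us"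
  shows "emb (Node [A]) (Node us)"
  by (rule emb.node[where g = "\<lambda>i. a"]) (use assms in \<open>auto simp: inj_on_def lessThan_Suc\<close>)

lemma emb_leaf: "emb (Node []) (Node us)"
  by (rule emb.node[where g = "\<lambda>i. i"]) auto




primrec chainH :: "(nat \<Rightarrow> rtree) \<Rightarrow> nat list \<Rightarrow> rtree list" where
  "chainH H [] = []"
| "chainH H (m # ms) = [Node ((if m = 0 then [] else [H m]) @ chainH H ms)]"

definition win :: "nat list \<Rightarrow> bool" where
  "win ys \<longleftrightarrow> (\<forall>d \<le> (length ys - 1) div 2. \<exists>i \<le> d. i < length ys \<and> d \<le> ys ! i)"

definition Pgood :: "nat list \<Rightarrow> bool" where
  "Pgood ys \<longleftrightarrow> (\<forall>j < length ys. win (drop j ys))"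

lemma chainH_ne: "ys \<noteq> [] \<Longrightarrow> chainH H ys = [hd (chainH H ys)]"
  by (cases ys) auto

lemma down_chain:
  "i < length ys \<Longrightarrow> emb T (hd (chainH H (drop i ys))) \<Longrightarrow> emb T (hd (chainH H ys))"
proof (induction i arbitrary: ys)
  case 0 then show ?case by simp
next
  case (Suc i)
  then obtain y ys' where ys: "ys = y # ys'" by (cases ys) auto
  have l: "i < length ys'" using Suc ys by simp
  have "emb T (hd (chainH H ys'))" using Suc.IH[OF l] Suc.prems ys by simp
  moreover have ne: "ys' \<noteq> []" using l by auto
  define hs where "hs = (if y = 0 then [] else [H y])"
  have "(hs @ chainH H ys') ! length hs = hd (chainH H ys')"
    using chainH_ne[OF ne, of H] by (metis nth_append_length)
  ultimately have "emb T (Node (hs @ chainH H ys'))"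
    by (intro emb.down[where i = "length hs"]) (use chainH_ne[OF ne, of H] in auto)
  then show ?case using ys hs_def by simp
qed

lemma top_chain: "i < length ys \<Longrightarrow>
   hd (chainH H (drop i ys)) = Node ((if ys ! i = 0 then [] else [H (ys ! i)]) @ chainH H (drop (Suc i) ys))"
  by (simp add: Cons_nth_drop_Suc[symmetric])

lemma Pgood_drop: "Pgood ys \<Longrightarrow> Pgood (drop k ys)"
  unfolding Pgood_def by (auto simp: add.commute)

lemma spine_emb:
  assumes Hu: "\<forall>m \<in> set ys. 0 < m \<longrightarrow> (\<forall>T. binary T \<and> card (nodes T) \<le> m \<longrightarrow> emb T (H m))"
    and good: "Pgood ys"
  shows "binary T \<Longrightarrow> card (nodes T) \<le> length ys \<Longrightarrow> emb T (hd (chainH H ys))"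
  using Hu good
proof (induction T arbitrary: ys)
  case (Node ts)
  have len: "length ts \<le> 2" and bch: "\<forall>t\<in>set ts. binary t" using Node.prems(1)
    by (auto simp: list_all_iff)
  have ne: "ys \<noteq> []" using Node.prems(2) card_nodes_pos[of "Node ts"] by auto
  obtain y ys' where ys: "ys = y # ys'" using ne by (cases ys) auto
  have top: "hd (chainH H ys) = Node ((if y = 0 then [] else [H y]) @ chainH H ys')" using ys by simp
  consider "ts = []" | A where "ts = [A]" | A B where "ts = [A, B]"
    using len by (cases ts; cases "tl ts"; auto simp: le_Suc_eq)
  then show ?case
  proof cases
    case 1 then show ?thesis using top emb_leaf by simp
  next
    case 2
    have cA: "card (nodes (Node ts)) = Suc (card (nodes A))" using 2 by (simp only: card_nodes_Node') simp
    have "card (nodes A) \<le> length ys'" using Node.prems(2) cA ys by simp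
    moreover have ne': "ys' \<noteq> []" using calculation card_nodes_pos[of A] by auto
    moreover have "emb A (hd (chainH H ys'))"
      apply (rule Node.IH)
      using 2 bch calculation Node.prems(3,4) ys Pgood_drop[of ys 1] by auto
    moreover obtain c where c: "chainH H ys' = [c]" using chainH_ne[OF ne', of H] by blast
    ultimately have "emb (Node [A]) (Node ((if y = 0 then [] else [H y]) @ chainH H ys'))"
      by (intro emb_one[where a = "length (if y = 0 then [] else [H y])"]) (auto simp: nth_append c)
    then show ?thesis using top 2 by simp
  next
    case 3
    have cT: "card (nodes (Node ts)) = Suc (card (nodes A) + card (nodes B))"
      using 3 by (simp only: card_nodes_Node') simp
    define L where "L = (if card (nodes A) \<le> card (nodes B) then A else B)"
    define Hv where "Hv = (if card (nodes A) \<le> card (nodes B) then B else A)"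
    have LH: "card (nodes L) \<le> card (nodes Hv)" "card (nodes L) + card (nodes Hv) = card (nodes A) + card (nodes B)"
      "binary L" "binary Hv" "L \<in> set ts" "Hv \<in> set ts"
      unfolding L_def Hv_def using 3 bch by auto
    define d where "d = card (nodes L)"
    have d1: "d \<ge> 1" unfolding d_def by (rule card_nodes_pos)
    have h1: "card (nodes Hv) \<ge> 1" by (rule card_nodes_pos)
    have "d \<le> (length ys - 1) div 2" using LH Node.prems(2) cT unfolding d_def by simp
    moreover have "win ys" using Node.prems(4) ne unfolding Pgood_def by (metis drop0 length_greater_0_conv)
    ultimately obtain i where i: "i \<le> d" "i < length ys" "d \<le> ys ! i" unfolding win_def by blast
    have ci: "card (nodes Hv) \<le> length (drop (Suc i) ys)"
      using LH Node.prems(2) cT i unfolding d_def by simp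
    then have ne2: "drop (Suc i) ys \<noteq> []" using h1 by auto
    have embH: "emb Hv (hd (chainH H (drop (Suc i) ys)))"
      apply (rule Node.IH[OF LH(6)])
      using LH ci Node.prems(3,4) Pgood_drop[of ys "Suc i"] set_drop_subset[of "Suc i" ys] by auto
    have yi: "ys ! i \<in> set ys" "0 < ys ! i" using i d1 by auto
    have embL: "emb L (H (ys ! i))" using Node.prems(3) yi LH i unfolding d_def by auto
    define us where "us = [H (ys ! i)] @ chainH H (drop (Suc i) ys)"
    have tc: "hd (chainH H (drop i ys)) = Node us"
      using top_chain[OF i(2), of H] yi unfolding us_def by simp
    obtain c where c: "chainH H (drop (Suc i) ys) = [c]" using chainH_ne[OF ne2, of H] by blast
    have us0: "us ! 0 = H (ys ! i)" and us1: "us ! Suc 0 = hd (chainH H (drop (Suc i) ys))" and lus: "length us = 2"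
      unfolding us_def by (simp_all add: c)
    have "emb (Node [A, B]) (Node us)"
    proof (cases "card (nodes A) \<le> card (nodes B)")
      case True
      then show ?thesis using embL embH unfolding L_def Hv_def
        by (intro emb_two[where a = 0 and b = 1]) (simp_all add: us0 us1 lus)
    next
      case False
      then show ?thesis using embL embH unfolding L_def Hv_def
        by (intro emb_two[where a = 1 and b = 0]) (simp_all add: us0 us1 lus)
    qed
    then show ?thesis using down_chain[OF i(2)] tc 3 by simp
  qed
qed




fun Qs :: "nat \<Rightarrow> nat list" where
  "Qs k = (if k = 0 then [] else Qs (k div 2) @ [k - 1] @ Qs ((k - 1) div 2))"

fun Ps :: "nat \<Rightarrow> nat list" where
  "Ps n = (if n = 0 then [] else Qs (3 * n div 10) @ [(n - 1) div 2] @ Ps (n - 3 * n div 10 - 1))"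

declare Qs.simps[simp del] Ps.simps[simp del]

lemma Qs0: "Qs 0 = []" by (simp add: Qs.simps)
lemma QsS: "k > 0 \<Longrightarrow> Qs k = Qs (k div 2) @ [k - 1] @ Qs ((k - 1) div 2)" by (simp add: Qs.simps)
lemma Ps0: "Ps 0 = []" by (simp add: Ps.simps)
lemma PsS: "n > 0 \<Longrightarrow> Ps n = Qs (3 * n div 10) @ [(n - 1) div 2] @ Ps (n - 3 * n div 10 - 1)"
  by (simp add: Ps.simps)

definition winQ :: "nat list \<Rightarrow> bool" where
  "winQ ys \<longleftrightarrow> (\<forall>d < length ys. \<exists>i \<le> d. i < length ys \<and> d \<le> ys ! i)"

definition Qgood :: "nat list \<Rightarrow> bool" where
  "Qgood ys \<longleftrightarrow> (\<forall>j < length ys. winQ (drop j ys))"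

lemma winQ_app:
  assumes "winQ as" "length as + length bs \<le> x"
  shows "winQ (as @ x # bs)"
  unfolding winQ_def
proof (intro allI impI)
  fix d assume d: "d < length (as @ x # bs)"
  show "\<exists>i\<le>d. i < length (as @ x # bs) \<and> d \<le> (as @ x # bs) ! i"
  proof (cases "d < length as")
    case True
    then obtain i where "i \<le> d" "i < length as" "d \<le> as ! i" using assms(1) unfolding winQ_def by blast
    then show ?thesis by (intro exI[of _ i]) (auto simp: nth_append)
  next
    case False
    then show ?thesis using d assms(2) by (intro exI[of _ "length as"]) (auto simp: nth_append)
  qed
qed

lemma win_app:
  assumes "winQ as" "(length as + length bs) div 2 \<le> x"
  shows "win (as @ x # bs)"
  unfolding win_def
proof (intro allI impI)
  fix d assume d: "d \<le> (length (as @ x # bs) - 1) div 2"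
  show "\<exists>i\<le>d. i < length (as @ x # bs) \<and> d \<le> (as @ x # bs) ! i"
  proof (cases "d < length as")
    case True
    then obtain i where "i \<le> d" "i < length as" "d \<le> as ! i" using assms(1) unfolding winQ_def by blast
    then show ?thesis by (intro exI[of _ i]) (auto simp: nth_append)
  next
    case False
    then show ?thesis using d assms(2) by (intro exI[of _ "length as"]) (auto simp: nth_append)
  qed
qed

lemma drop_app3: "j \<le> length as \<Longrightarrow> drop j (as @ x # bs) = drop j as @ x # bs"
  by simp
lemma drop_app3': "length as < j \<Longrightarrow> drop j (as @ x # bs) = drop (j - length as - 1) bs"
  by (simp add: drop_Cons')

lemma Qs_props: "length (Qs k) = k \<and> (\<forall>m\<in>set (Qs k). m < k) \<and> Qgood (Qs k)"
proof (induction k rule: less_induct)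
  case (less k)
  show ?case
  proof (cases "k = 0")
    case True then show ?thesis by (simp add: Qs0 Qgood_def)
  next
    case False
    define A where "A = Qs (k div 2)"
    define B where "B = Qs ((k - 1) div 2)"
    have IA: "length A = k div 2" "\<forall>m\<in>set A. m < k div 2" "Qgood A"
      using less[of "k div 2"] False unfolding A_def by auto
    have IB: "length B = (k - 1) div 2" "\<forall>m\<in>set B. m < (k - 1) div 2" "Qgood B"
      using less[of "(k - 1) div 2"] False unfolding B_def by auto
    have Q: "Qs k = A @ (k - 1) # B" using QsS[of k] False unfolding A_def B_def by simp
    have L: "length (Qs k) = k" using Q IA IB False by simp
    moreover have "\<forall>m\<in>set (Qs k). m < k" using Q IA IB False by auto
    moreover have "Qgood (Qs k)"
      unfolding Qgood_def
    proof (intro allI impI)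
      fix j assume j: "j < length (Qs k)"
      show "winQ (drop j (Qs k))"
      proof (cases "j \<le> length A")
        case True
        have w: "winQ (drop j A)"
        proof (cases "j < length A")
          case True then show ?thesis using IA(3) unfolding Qgood_def by blast
        next
          case False then show ?thesis using \<open>j \<le> length A\<close> by (simp add: winQ_def)
        qed
        have "length (drop j A) + length B \<le> k - 1" using IA IB False by simp
        then show ?thesis using winQ_app[OF w] Q True by simp
      next
        case False
        then have "j - length A - 1 < length B" using j Q by simp
        then show ?thesis using IB(3) Q False unfolding Qgood_def by (simp add: drop_Cons')
      qed
    qed
    ultimately show ?thesis by blast
  qed
qed

lemma Ps_props: "length (Ps n) = n \<and> (\<forall>m\<in>set (Ps n). m < n) \<and> Pgood (Ps n)"
proof (induction n rule: less_induct)
  case (less n)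
  show ?case
  proof (cases "n = 0")
    case True then show ?thesis by (simp add: Ps0 Pgood_def)
  next
    case False
    define k where "k = 3 * n div 10"
    define r where "r = n - k - 1"
    define A where "A = Qs k"
    define B where "B = Ps r"
    have kn: "k \<le> n - 1" "r < n" "k + r = n - 1" using False unfolding k_def r_def by auto
    have IA: "length A = k" "\<forall>m\<in>set A. m < k" "Qgood A"
      using Qs_props[of k] unfolding A_def by auto
    have IB: "length B = r" "\<forall>m\<in>set B. m < r" "Pgood B"
      using less[of r] kn unfolding B_def by auto
    have P: "Ps n = A @ ((n - 1) div 2) # B" using PsS[of n] False unfolding A_def B_def k_def r_def by simp
    have "length (Ps n) = n" using P IA IB kn False by simp
    moreover have "\<forall>m\<in>set (Ps n). m < n" using P IA IB kn False by auto
    moreover have "Pgood (Ps n)"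
      unfolding Pgood_def
    proof (intro allI impI)
      fix j assume j: "j < length (Ps n)"
      show "win (drop j (Ps n))"
      proof (cases "j \<le> length A")
        case True
        have w: "winQ (drop j A)"
        proof (cases "j < length A")
          case True then show ?thesis using IA(3) unfolding Qgood_def by blast
        next
          case False then show ?thesis using \<open>j \<le> length A\<close> by (simp add: winQ_def)
        qed
        have "(length (drop j A) + length B) div 2 \<le> (n - 1) div 2"
          using IA IB kn by (intro div_le_mono) simp
        then show ?thesis using win_app[OF w] P True by simp
      next
        case False
        then have "j - length A - 1 < length B" using j P by simp
        then show ?thesis using IB(3) P False unfolding Pgood_def by (simp add: drop_Cons')
      qed
    qed
    ultimately show ?thesis by blast
  qed
qed




definition bet :: real where "bet = 89/47"
definition Bf :: "nat \<Rightarrow> real" where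
  "Bf m = (if m = 0 then 0 else real m powr bet - 3/2 * (real m - 1))"

lemma chain_card:
  "ys \<noteq> [] \<Longrightarrow> card (nodes (hd (chainH H ys))) =
     length ys + (\<Sum>m\<leftarrow>ys. if m = 0 then 0 else card (nodes (H m)))"
proof (induction ys)
  case Nil then show ?case by simp
next
  case (Cons m ys)
  show ?case
  proof (cases "ys = []")
    case True then show ?thesis by (simp del: nodes.simps add: card_nodes_Node')
  next
    case False
    obtain c where c: "chainH H ys = [c]" using chainH_ne[OF False, of H] by blast
    have "card (nodes c) = length ys + (\<Sum>m\<leftarrow>ys. if m = 0 then 0 else card (nodes (H m)))"
      using Cons.IH[OF False] c by simp
    then show ?thesis using c by (simp del: nodes.simps add: card_nodes_Node')
  qed
qed

lemma univ:
  assumes Pb: "\<And>n. 1 \<le> n \<Longrightarrow> real n + (\<Sum>m\<leftarrow>Ps n. Bf m) \<le> Bf n"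
  shows "1 \<le> n \<Longrightarrow> \<exists>U. real (card (nodes U)) \<le> Bf n \<and> (\<forall>T. binary T \<and> card (nodes T) \<le> n \<longrightarrow> emb T U)"
proof (induction n rule: less_induct)
  case (less n)
  have "\<forall>m. \<exists>U. 1 \<le> m \<and> m < n \<longrightarrow> real (card (nodes U)) \<le> Bf m \<and> (\<forall>T. binary T \<and> card (nodes T) \<le> m \<longrightarrow> emb T U)"
    using less.IH by blast
  then obtain H where H: "\<And>m. 1 \<le> m \<Longrightarrow> m < n \<Longrightarrow> real (card (nodes (H m))) \<le> Bf m \<and> (\<forall>T. binary T \<and> card (nodes T) \<le> m \<longrightarrow> emb T (H m))"
    by metis
  have PP: "length (Ps n) = n" "\<forall>m\<in>set (Ps n). m < n" "Pgood (Ps n)" using Ps_props[of n] by auto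
  have ne: "Ps n \<noteq> []" using PP(1) less.prems by auto
  define U where "U = hd (chainH H (Ps n))"
  have "\<forall>T. binary T \<and> card (nodes T) \<le> n \<longrightarrow> emb T U"
  proof (intro allI impI)
    fix T assume T: "binary T \<and> card (nodes T) \<le> n"
    have Hu: "\<forall>m \<in> set (Ps n). 0 < m \<longrightarrow> (\<forall>T. binary T \<and> card (nodes T) \<le> m \<longrightarrow> emb T (H m))"
      using H PP(2) by auto
    show "emb T U" unfolding U_def using spine_emb[OF Hu PP(3)] T PP(1) by auto
  qed
  moreover have "real (card (nodes U)) \<le> Bf n"
  proof -
    have "real (card (nodes U)) = real n + (\<Sum>m\<leftarrow>Ps n. real (if m = 0 then 0 else card (nodes (H m))))"
      unfolding U_def chain_card[OF ne] using PP(1) by (simp add: sum_list_of_nat[symmetric] o_def)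
    also have "\<dots> \<le> real n + (\<Sum>m\<leftarrow>Ps n. Bf m)"
    proof -
      have "(\<Sum>m\<leftarrow>Ps n. real (if m = 0 then 0 else card (nodes (H m)))) \<le> (\<Sum>m\<leftarrow>Ps n. Bf m)"
      proof (rule sum_list_mono)
        fix m assume "m \<in> set (Ps n)"
        then show "real (if m = 0 then 0 else card (nodes (H m))) \<le> Bf m"
          using H[of m] PP(2) by (cases "m = 0") (auto simp: Bf_def)
      qed
      then show ?thesis by simp
    qed
    also have "\<dots> \<le> Bf n" using Pb less.prems by simp
    finally show ?thesis .
  qed
  ultimately show ?case by blast
qed




definition qc :: real where "qc = 125000/57717"
definition QBd :: "nat \<Rightarrow> real" where
  "QBd k = (if k = 0 then 0 else qc * real k powr bet - 3/4 * (real k - 1))"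

lemma powr_up:
  fixes x U :: real
  assumes "0 < x" "0 \<le> U" "x ^ 89 \<le> U ^ 47"
  shows "x powr bet \<le> U"
proof -
  have "(x powr bet) ^ 47 = x ^ 89"
  proof -
    have "(x powr bet) ^ 47 = (x powr bet) powr (real 47)"
      using assms(1) by (simp add: powr_realpow)
    also have "\<dots> = x powr (real 89)" by (simp add: powr_powr bet_def)
    also have "\<dots> = x ^ 89" using assms(1) by (simp add: powr_realpow)
    finally show ?thesis .
  qed
  then have "(x powr bet) ^ Suc 46 \<le> U ^ Suc 46" using assms(3) by simp
  then show ?thesis using assms(2) by (rule power_le_imp_le_base)
qed

lemma up19:
  fixes x U :: real
  assumes "1 \<le> x" "0 \<le> U" "x ^ 19 \<le> U ^ 10"
  shows "x powr bet \<le> U"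
proof -
  have "x powr bet \<le> x powr (19/10)" using assms(1) by (intro powr_mono) (simp_all add: bet_def)
  moreover have "(x powr (19/10)) ^ 10 = x ^ 19"
  proof -
    have "(x powr (19/10)) ^ 10 = (x powr (19/10)) powr (real 10)"
      using assms(1) by (simp add: powr_realpow)
    also have "\<dots> = x powr (real 19)" by (simp add: powr_powr)
    also have "\<dots> = x ^ 19" using assms(1) by (simp add: powr_realpow)
    finally show ?thesis .
  qed
  then have "(x powr (19/10)) ^ Suc 9 \<le> U ^ Suc 9" using assms(3) by simp
  then have "x powr (19/10) \<le> U" using assms(2) by (rule power_le_imp_le_base)
  ultimately show ?thesis by linarith
qed

lemma lo17:
  fixes x L :: real
  assumes "1 \<le> x" "0 \<le> L" "L ^ 9 \<le> x ^ 17"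
  shows "L \<le> x powr bet"
proof -
  have "x powr (17/9) \<le> x powr bet" using assms(1) by (intro powr_mono) (simp_all add: bet_def)
  moreover have "(x powr (17/9)) ^ 9 = x ^ 17"
  proof -
    have "(x powr (17/9)) ^ 9 = (x powr (17/9)) powr (real 9)"
      using assms(1) by (simp add: powr_realpow)
    also have "\<dots> = x powr (real 17)" by (simp add: powr_powr)
    also have "\<dots> = x ^ 17" using assms(1) by (simp add: powr_realpow)
    finally show ?thesis .
  qed
  then have "L ^ Suc 8 \<le> (x powr (17/9)) ^ Suc 8" using assms(3) by simp
  then have "L \<le> x powr (17/9)" by (rule power_le_imp_le_base) simp
  ultimately show ?thesis by linarith
qed

lemma c2: "(1/2::real) powr bet \<le> (67283/250000)" by (rule powr_up) (simp_all add: power_divide)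
lemma c3: "(3/10::real) powr bet \<le> (102299/1000000)" by (rule powr_up) (simp_all add: power_divide)
lemma c7: "(7/10::real) powr bet \<le> (10179/20000)" by (rule powr_up) (simp_all add: power_divide)
lemma bet_pos: "0 \<le> bet" by (simp add: bet_def)

lemma ub2: "(2::real) powr bet \<le> (19/5)" by (rule up19) (simp_all add: power_divide)
lemma ub3: "(3::real) powr bet \<le> (81/10)" by (rule up19) (simp_all add: power_divide)
lemma ub4: "(4::real) powr bet \<le> 14" by (rule up19) (simp_all add: power_divide)
lemma ub5: "(5::real) powr bet \<le> (213/10)" by (rule up19) (simp_all add: power_divide)
lemma ub6: "(6::real) powr bet \<le> (301/10)" by (rule up19) (simp_all add: power_divide)
lemma ub7: "(7::real) powr bet \<le> (202/5)" by (rule up19) (simp_all add: power_divide)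
lemma ub8: "(8::real) powr bet \<le> 52" by (rule up19) (simp_all add: power_divide)
lemma ub9: "(9::real) powr bet \<le> (651/10)" by (rule up19) (simp_all add: power_divide)
lemma ub10: "(10::real) powr bet \<le> (159/2)" by (rule up19) (simp_all add: power_divide)
lemma ub11: "(11::real) powr bet \<le> (953/10)" by (rule up19) (simp_all add: power_divide)
lemma ub12: "(12::real) powr bet \<le> (562/5)" by (rule up19) (simp_all add: power_divide)
lemma ub13: "(13::real) powr bet \<le> (654/5)" by (rule up19) (simp_all add: power_divide)
lemma ub14: "(14::real) powr bet \<le> (753/5)" by (rule up19) (simp_all add: power_divide)
lemma ub15: "(15::real) powr bet \<le> (1717/10)" by (rule up19) (simp_all add: power_divide)
lemma ub16: "(16::real) powr bet \<le> (1941/10)" by (rule up19) (simp_all add: power_divide)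
lemma ub17: "(17::real) powr bet \<le> (2177/10)" by (rule up19) (simp_all add: power_divide)
lemma ub18: "(18::real) powr bet \<le> (2427/10)" by (rule up19) (simp_all add: power_divide)
lemma lb2: "(37/10) \<le> (2::real) powr bet" by (rule lo17) (simp_all add: power_divide)
lemma lb3: "(79/10) \<le> (3::real) powr bet" by (rule lo17) (simp_all add: power_divide)
lemma lb4: "(137/10) \<le> (4::real) powr bet" by (rule lo17) (simp_all add: power_divide)
lemma lb5: "(209/10) \<le> (5::real) powr bet" by (rule lo17) (simp_all add: power_divide)
lemma lb6: "(59/2) \<le> (6::real) powr bet" by (rule lo17) (simp_all add: power_divide)
lemma lb7: "(197/5) \<le> (7::real) powr bet" by (rule lo17) (simp_all add: power_divide)
lemma lb8: "(507/10) \<le> (8::real) powr bet" by (rule lo17) (simp_all add: power_divide)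
lemma lb9: "(317/5) \<le> (9::real) powr bet" by (rule lo17) (simp_all add: power_divide)
lemma lb10: "(387/5) \<le> (10::real) powr bet" by (rule lo17) (simp_all add: power_divide)
lemma lb11: "(463/5) \<le> (11::real) powr bet" by (rule lo17) (simp_all add: power_divide)
lemma lb12: "(546/5) \<le> (12::real) powr bet" by (rule lo17) (simp_all add: power_divide)
lemma lb13: "127 \<le> (13::real) powr bet" by (rule lo17) (simp_all add: power_divide)
lemma lb14: "(1461/10) \<le> (14::real) powr bet" by (rule lo17) (simp_all add: power_divide)
lemma lb15: "(333/2) \<le> (15::real) powr bet" by (rule lo17) (simp_all add: power_divide)
lemma lb16: "(1881/10) \<le> (16::real) powr bet" by (rule lo17) (simp_all add: power_divide)
lemma lb17: "(2109/10) \<le> (17::real) powr bet" by (rule lo17) (simp_all add: power_divide)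
lemma lb18: "235 \<le> (18::real) powr bet" by (rule lo17) (simp_all add: power_divide)
lemma lb19: "(1301/5) \<le> (19::real) powr bet" by (rule lo17) (simp_all add: power_divide)
lemma lb20: "(2867/10) \<le> (20::real) powr bet" by (rule lo17) (simp_all add: power_divide)
lemma lb21: "(1572/5) \<le> (21::real) powr bet" by (rule lo17) (simp_all add: power_divide)
lemma lb22: "(3433/10) \<le> (22::real) powr bet" by (rule lo17) (simp_all add: power_divide)
lemma lb23: "(3733/10) \<le> (23::real) powr bet" by (rule lo17) (simp_all add: power_divide)
lemma lb24: "(2023/5) \<le> (24::real) powr bet" by (rule lo17) (simp_all add: power_divide)
lemma lb25: "437 \<le> (25::real) powr bet" by (rule lo17) (simp_all add: power_divide)
lemma lb26: "(2353/5) \<le> (26::real) powr bet" by (rule lo17) (simp_all add: power_divide)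
lemma lb27: "(2527/5) \<le> (27::real) powr bet" by (rule lo17) (simp_all add: power_divide)
definition NI :: "nat \<Rightarrow> bool" where
  "NI n \<longleftrightarrow> real n + QBd (3 * n div 10) + Bf ((n - 1) div 2)
     + (if n - 3 * n div 10 - 1 = 0 then 0 else Bf (n - 3 * n div 10 - 1) - real (n - 3 * n div 10 - 1))
     \<le> Bf n"

lemma small_cases: assumes "1 \<le> n" "n < 28" shows "NI n"
proof -
  have "n = 1 \<or> n = 2 \<or> n = 3 \<or> n = 4 \<or> n = 5 \<or> n = 6 \<or> n = 7 \<or> n = 8 \<or> n = 9 \<or> n = 10 \<or> n = 11 \<or> n = 12 \<or> n = 13 \<or> n = 14 \<or> n = 15 \<or> n = 16 \<or> n = 17 \<or> n = 18 \<or> n = 19 \<or> n = 20 \<or> n = 21 \<or> n = 22 \<or> n = 23 \<or> n = 24 \<or> n = 25 \<or> n = 26 \<or> n = 27" using assms by presburger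
  then consider "n = 1" | "n = 2" | "n = 3" | "n = 4" | "n = 5" | "n = 6" | "n = 7" | "n = 8" | "n = 9" | "n = 10" | "n = 11" | "n = 12" | "n = 13" | "n = 14" | "n = 15" | "n = 16" | "n = 17" | "n = 18" | "n = 19" | "n = 20" | "n = 21" | "n = 22" | "n = 23" | "n = 24" | "n = 25" | "n = 26" | "n = 27" by blast
  then show ?thesis
  proof cases
    case 1 then show ?thesis by (simp add: NI_def QBd_def Bf_def)

  next
    case 2 then show ?thesis using  lb2 by (simp add: NI_def QBd_def Bf_def qc_def)

  next
    case 3 then show ?thesis using ub2 lb3 by (simp add: NI_def QBd_def Bf_def qc_def)

  next
    case 4 then show ?thesis using ub2 lb4 by (simp add: NI_def QBd_def Bf_def qc_def)

  next
    case 5 then show ?thesis using ub2 ub3 lb5 by (simp add: NI_def QBd_def Bf_def qc_def)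

  next
    case 6 then show ?thesis using ub2 ub4 lb6 by (simp add: NI_def QBd_def Bf_def qc_def)

  next
    case 7 then show ?thesis using ub2 ub3 ub4 lb7 by (simp add: NI_def QBd_def Bf_def qc_def)

  next
    case 8 then show ?thesis using ub2 ub3 ub5 lb8 by (simp add: NI_def QBd_def Bf_def qc_def)

  next
    case 9 then show ?thesis using ub2 ub4 ub6 lb9 by (simp add: NI_def QBd_def Bf_def qc_def)

  next
    case 10 then show ?thesis using ub3 ub4 ub6 lb10 by (simp add: NI_def QBd_def Bf_def qc_def)

  next
    case 11 then show ?thesis using ub3 ub5 ub7 lb11 by (simp add: NI_def QBd_def Bf_def qc_def)

  next
    case 12 then show ?thesis using ub3 ub5 ub8 lb12 by (simp add: NI_def QBd_def Bf_def qc_def)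

  next
    case 13 then show ?thesis using ub3 ub6 ub9 lb13 by (simp add: NI_def QBd_def Bf_def qc_def)

  next
    case 14 then show ?thesis using ub4 ub6 ub9 lb14 by (simp add: NI_def QBd_def Bf_def qc_def)

  next
    case 15 then show ?thesis using ub4 ub7 ub10 lb15 by (simp add: NI_def QBd_def Bf_def qc_def)

  next
    case 16 then show ?thesis using ub4 ub7 ub11 lb16 by (simp add: NI_def QBd_def Bf_def qc_def)

  next
    case 17 then show ?thesis using ub5 ub8 ub11 lb17 by (simp add: NI_def QBd_def Bf_def qc_def)

  next
    case 18 then show ?thesis using ub5 ub8 ub12 lb18 by (simp add: NI_def QBd_def Bf_def qc_def)

  next
    case 19 then show ?thesis using ub5 ub9 ub13 lb19 by (simp add: NI_def QBd_def Bf_def qc_def)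

  next
    case 20 then show ?thesis using ub6 ub9 ub13 lb20 by (simp add: NI_def QBd_def Bf_def qc_def)

  next
    case 21 then show ?thesis using ub6 ub10 ub14 lb21 by (simp add: NI_def QBd_def Bf_def qc_def)

  next
    case 22 then show ?thesis using ub6 ub10 ub15 lb22 by (simp add: NI_def QBd_def Bf_def qc_def)

  next
    case 23 then show ?thesis using ub6 ub11 ub16 lb23 by (simp add: NI_def QBd_def Bf_def qc_def)

  next
    case 24 then show ?thesis using ub7 ub11 ub16 lb24 by (simp add: NI_def QBd_def Bf_def qc_def)

  next
    case 25 then show ?thesis using ub7 ub12 ub17 lb25 by (simp add: NI_def QBd_def Bf_def qc_def)

  next
    case 26 then show ?thesis using ub7 ub12 ub18 lb26 by (simp add: NI_def QBd_def Bf_def qc_def)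

  next
    case 27 then show ?thesis using ub8 ub13 ub18 lb27 by (simp add: NI_def QBd_def Bf_def qc_def)

  qed
qed




lemma Bf_pos_form: "m \<ge> 1 \<Longrightarrow> Bf m = real m powr bet - 3/2 * (real m - 1)"
  by (simp add: Bf_def)

lemma pow_scale:
  assumes "real a \<le> c * real n" "0 \<le> c" "c powr bet \<le> u"
  shows "real a powr bet \<le> u * real n powr bet"
proof -
  have "real a powr bet \<le> (c * real n) powr bet"
    using assms(1) bet_pos by (intro powr_mono2) auto
  also have "\<dots> = c powr bet * real n powr bet" using assms(2) by (simp add: powr_mult)
  also have "\<dots> \<le> u * real n powr bet" using assms(3) by (intro mult_right_mono) auto
  finally show ?thesis .
qed

lemma Qbound: "(\<Sum>m\<leftarrow>Qs k. Bf m) \<le> QBd k"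
proof (induction k rule: less_induct)
  case (less k)
  show ?case
  proof (cases "k \<le> 2")
    case True
    then consider "k = 0" | "k = 1" | "k = 2" by linarith
    then show ?thesis
    proof cases
      case 1 then show ?thesis by (simp add: Qs0 QBd_def)
    next
      case 2 then show ?thesis by (simp add: QsS Qs0 QBd_def Bf_def qc_def)
    next
      case 3
      have "Qs 2 = [0, 1]" by (simp add: QsS Qs0)
      moreover have "1 \<le> (2::real) powr bet" using bet_pos by (intro ge_one_powr_ge_zero) auto
      ultimately show ?thesis using 3 by (simp add: QBd_def Bf_def qc_def)
    qed
  next
    case False
    define a where "a = k div 2"
    define b where "b = (k - 1) div 2"
    have ab: "1 \<le> a" "1 \<le> b" "a + b + 1 = k" "2 * a \<le> k" "2 * b \<le> k" using False unfolding a_def b_def by auto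
    have Q: "Qs k = Qs a @ [k - 1] @ Qs b" using QsS[of k] False unfolding a_def b_def by simp
    have IA: "(\<Sum>m\<leftarrow>Qs a. Bf m) \<le> QBd a" using less[of a] ab by simp
    have IB: "(\<Sum>m\<leftarrow>Qs b. Bf m) \<le> QBd b" using less[of b] ab by simp
    define K where "K = real k powr bet"
    have Ka: "real a powr bet \<le> (67283/250000) * K" unfolding K_def
      by (rule pow_scale[OF _ _ c2]) (use ab in auto)
    have Kb: "real b powr bet \<le> (67283/250000) * K" unfolding K_def
      by (rule pow_scale[OF _ _ c2]) (use ab in auto)
    have Kk: "real (k - 1) powr bet \<le> K" unfolding K_def
      using bet_pos by (intro powr_mono2) auto
    have "(\<Sum>m\<leftarrow>Qs k. Bf m) = (\<Sum>m\<leftarrow>Qs a. Bf m) + Bf (k - 1) + (\<Sum>m\<leftarrow>Qs b. Bf m)"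
      using Q by simp
    also have "\<dots> \<le> QBd a + Bf (k - 1) + QBd b" using IA IB by simp
    also have "\<dots> \<le> QBd k"
    proof -
      have e1: "QBd a = qc * real a powr bet - 3/4 * (real a - 1)" using ab by (simp add: QBd_def)
      have e2: "QBd b = qc * real b powr bet - 3/4 * (real b - 1)" using ab by (simp add: QBd_def)
      have e3: "QBd k = qc * K - 3/4 * (real k - 1)" using ab by (simp add: QBd_def K_def)
      have e4: "Bf (k - 1) = real (k - 1) powr bet - 3/2 * (real (k - 1) - 1)" using ab by (simp add: Bf_def)
      have r: "real a + real b + 1 = real k" "real (k - 1) = real k - 1" "real k \<ge> 3" using ab False by auto
      have m1: "qc * real a powr bet \<le> qc * ((67283/250000) * K)" using Ka by (intro mult_left_mono) (auto simp: qc_def)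
      have m2: "qc * real b powr bet \<le> qc * ((67283/250000) * K)" using Kb by (intro mult_left_mono) (auto simp: qc_def)
      have m3: "qc * ((67283/250000) * K) + qc * ((67283/250000) * K) + K = qc * K" by (simp add: qc_def algebra_simps)
      show ?thesis unfolding e1 e2 e3 e4 using m1 m2 m3 Kk r by argo
    qed
    finally show ?thesis .
  qed
qed

lemma large_ineq:
  fixes k M r n :: nat
  assumes "1 \<le> k" "1 \<le> M" "1 \<le> r" "10 * k \<le> 3 * n" "n \<le> 2 * M + 2" "2 * M \<le> n"
    "k + r + 1 = n" "28 \<le> n" "3 * n \<le> 10 * k + 9"
  shows "real n + QBd k + Bf M + (Bf r - real r) \<le> Bf n"
proof -
  define N where "N = real n powr bet"
  have hk: "real k powr bet \<le> (102299/1000000) * N" unfolding N_def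
    by (rule pow_scale[OF _ _ c3]) (use assms in auto)
  have hM: "real M powr bet \<le> (67283/250000) * N" unfolding N_def
    by (rule pow_scale[OF _ _ c2]) (use assms in auto)
  have hr: "real r powr bet \<le> (10179/20000) * N" unfolding N_def
    by (rule pow_scale[OF _ _ c7]) (use assms in auto)
  have N0: "0 \<le> N" unfolding N_def by simp
  have m1: "qc * real k powr bet \<le> qc * ((102299/1000000) * N)" using hk by (intro mult_left_mono) (auto simp: qc_def)
  have m2: "qc * ((102299/1000000) * N) + (67283/250000) * N + (10179/20000) * N \<le> N"
    using N0 by (simp add: qc_def algebra_simps)
  have e1: "QBd k = qc * real k powr bet - 3/4 * (real k - 1)" using assms by (simp add: QBd_def)
  have lin: "10 * real k \<le> 3 * real n" "real n \<le> 2 * real M + 2" "real k + real r + 1 = real n" "28 \<le> real n"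
    using assms by linarith+
  have eN: "Bf n = N - 3/2 * (real n - 1)" using assms(8) by (simp add: Bf_def N_def)
  show ?thesis unfolding e1 Bf_pos_form[OF assms(2)] Bf_pos_form[OF assms(3)] eN using hk hM hr N0 lin m1 m2 by argo
qed

lemma NI_all: "1 \<le> n \<Longrightarrow> NI n"
proof (cases "n < 28")
  case True
  assume "1 \<le> n" then show ?thesis using small_cases True by blast
next
  case False
  define k where "k = 3 * n div 10"
  define M where "M = (n - 1) div 2"
  define r where "r = n - k - 1"
  have f: "1 \<le> k" "1 \<le> M" "1 \<le> r" "10 * k \<le> 3 * n" "n \<le> 2 * M + 2" "2 * M \<le> n"
    "k + r + 1 = n" "28 \<le> n" "3 * n \<le> 10 * k + 9" using False unfolding k_def M_def r_def by auto
  have "real n + QBd k + Bf M + (Bf r - real r) \<le> Bf n" by (rule large_ineq[OF f])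
  moreover have "(r = 0) = False" using f(3) by simp
  ultimately show ?thesis unfolding NI_def k_def[symmetric] M_def[symmetric] r_def[symmetric] by simp
qed

lemma Pbound: "1 \<le> n \<Longrightarrow> real n + (\<Sum>m\<leftarrow>Ps n. Bf m) \<le> Bf n"
proof (induction n rule: less_induct)
  case (less n)
  define k where "k = 3 * n div 10"
  define M where "M = (n - 1) div 2"
  define r where "r = n - k - 1"
  have P: "Ps n = Qs k @ [M] @ Ps r" using PsS[of n] less.prems unfolding k_def M_def r_def by simp
  have rn: "r < n" using less.prems unfolding r_def by simp
  have R: "(\<Sum>m\<leftarrow>Ps r. Bf m) \<le> (if r = 0 then 0 else Bf r - real r)"
  proof (cases "r = 0")
    case True then show ?thesis by (simp add: Ps0)
  next
    case False then show ?thesis using less.IH[OF rn] by simp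
  qed
  have "real n + (\<Sum>m\<leftarrow>Ps n. Bf m) = real n + (\<Sum>m\<leftarrow>Qs k. Bf m) + Bf M + (\<Sum>m\<leftarrow>Ps r. Bf m)"
    using P by simp
  also have "\<dots> \<le> real n + QBd k + Bf M + (if r = 0 then 0 else Bf r - real r)"
    using Qbound[of k] R by simp
  also have "\<dots> \<le> Bf n" using NI_all[OF less.prems] unfolding NI_def k_def M_def r_def by assumption
  finally show ?case .
qed




lemma univ_n: "1 \<le> n \<Longrightarrow> \<exists>U. real (card (nodes U)) \<le> Bf n \<and> (\<forall>T. binary T \<and> card (nodes T) \<le> n \<longrightarrow> emb T U)"
  by (rule univ[OF Pbound])

theorem mainTheorem1:
  fixes n :: nat
  assumes "n \<ge> 1"
  shows "(\<exists>U. real (card (nodes U)) \<le> real n powr (1894/1000) \<and>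
            (\<forall>T. binary T \<and> card (nodes T) = n \<longrightarrow> top_minor T U))
       \<and> (\<exists>dec :: bool list \<Rightarrow> bool list \<Rightarrow> bool list.
            \<forall>T. binary T \<and> card (nodes T) = n \<longrightarrow>
              (\<exists>enc :: nat list \<Rightarrow> bool list.
                 inj_on enc (nodes T) \<and>
                 (\<forall>u\<in>nodes T. real (length (enc u)) \<le> of_int \<lceil>(1894/1000) * log 2 (real n)\<rceil>) \<and>
                 (\<forall>u\<in>nodes T. \<forall>v\<in>nodes T. dec (enc u) (enc v) = enc (nca u v))))"
proof -
  obtain U where U: "real (card (nodes U)) \<le> Bf n" "\<forall>T. binary T \<and> card (nodes T) \<le> n \<longrightarrow> emb T U"
    using univ_n[OF assms] by blast
  have n1: "1 \<le> real n" using assms by simp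
  have "Bf n \<le> real n powr bet" using assms by (simp add: Bf_def)
  also have "\<dots> \<le> real n powr (1894/1000)" using n1 by (intro powr_mono) (simp_all add: bet_def)
  finally have cardU: "real (card (nodes U)) \<le> real n powr (1894/1000)" using U(1) by linarith
  have tm: "\<forall>T. binary T \<and> card (nodes T) = n \<longrightarrow> top_minor T U"
    using U(2) emb_top unfolding top_minor_def by (metis order_refl)
  define x where "x = (1894/1000) * log 2 (real n)"
  have x0: "0 \<le> x" unfolding x_def using n1 by simp
  define K where "K = nat \<lceil>x\<rceil>"
  have K: "real K = of_int \<lceil>x\<rceil>" "x \<le> real K" unfolding K_def using x0 by auto
  have "real n powr (1894/1000) = 2 powr x"
  proof -
    have "real n = 2 powr (log 2 (real n))" using n1 by simp
    then have "real n powr (1894/1000) = (2 powr (log 2 (real n))) powr (1894/1000)" by simp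
    also have "\<dots> = 2 powr x" unfolding x_def by (simp add: powr_powr mult.commute)
    finally show ?thesis .
  qed
  also have "\<dots> \<le> 2 powr (real K)" using K(2) by (intro powr_mono) auto
  also have "\<dots> = 2 ^ K" by (simp add: powr_realpow)
  finally have "real (card (nodes U)) \<le> 2 ^ K" using cardU by linarith
  then have cK: "card (nodes U) \<le> 2 ^ K" by (metis of_nat_le_iff of_nat_numeral of_nat_power)
  define S where "S = {xs :: bool list. set xs \<subseteq> UNIV \<and> length xs = K}"
  have cS: "card S = 2 ^ K" unfolding S_def using card_lists_length_eq[of "UNIV :: bool set" K] by (simp only: card_UNIV_bool finite_UNIV)
  have fS: "finite S" unfolding S_def using finite_lists_length_eq[of "UNIV :: bool set" K] by (simp only: finite_UNIV simp_thms)
  obtain lab where lab: "lab ` nodes U \<subseteq> S" "inj_on lab (nodes U)"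
    using card_le_inj[OF finite_nodes[of U] fS] cK cS by auto
  define dec where "dec = (\<lambda>a b. lab (nca (inv_into (nodes U) lab a) (inv_into (nodes U) lab b)))"
  have "\<forall>T. binary T \<and> card (nodes T) = n \<longrightarrow>
              (\<exists>enc :: nat list \<Rightarrow> bool list.
                 inj_on enc (nodes T) \<and>
                 (\<forall>u\<in>nodes T. real (length (enc u)) \<le> of_int \<lceil>(1894/1000) * log 2 (real n)\<rceil>) \<and>
                 (\<forall>u\<in>nodes T. \<forall>v\<in>nodes T. dec (enc u) (enc v) = enc (nca u v)))"
  proof (intro allI impI)
    fix T assume T: "binary T \<and> card (nodes T) = n"
    then obtain f where f: "inj_on f (nodes T)" "f ` nodes T \<subseteq> nodes U"
      "\<forall>u\<in>nodes T. \<forall>v\<in>nodes T. f (nca u v) = nca (f u) (f v)"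
      using tm unfolding top_minor_def by blast
    define enc where "enc = lab \<circ> f"
    have "inj_on enc (nodes T)" unfolding enc_def
      using f(1) inj_on_subset[OF lab(2) f(2)] by (rule comp_inj_on)
    moreover have "\<forall>u\<in>nodes T. real (length (enc u)) \<le> of_int \<lceil>(1894/1000) * log 2 (real n)\<rceil>"
    proof
      fix u assume "u \<in> nodes T"
      then have "enc u \<in> S" unfolding enc_def using f(2) lab(1) by auto
      then have "length (enc u) = K" unfolding S_def by simp
      then show "real (length (enc u)) \<le> of_int \<lceil>(1894/1000) * log 2 (real n)\<rceil>"
        using K(1) unfolding x_def by simp
    qed
    moreover have "\<forall>u\<in>nodes T. \<forall>v\<in>nodes T. dec (enc u) (enc v) = enc (nca u v)"
    proof (intro ballI)
      fix u v assume u: "u \<in> nodes T" and v: "v \<in> nodes T"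
      have "inv_into (nodes U) lab (enc u) = f u" unfolding enc_def using u f(2) lab(2)
        by (simp add: inv_into_f_f subsetD)
      moreover have "inv_into (nodes U) lab (enc v) = f v" unfolding enc_def using v f(2) lab(2)
        by (simp add: inv_into_f_f subsetD)
      ultimately show "dec (enc u) (enc v) = enc (nca u v)"
        unfolding dec_def using f(3) u v by (simp add: enc_def)
    qed
    ultimately show "\<exists>enc :: nat list \<Rightarrow> bool list.
                 inj_on enc (nodes T) \<and>
                 (\<forall>u\<in>nodes T. real (length (enc u)) \<le> of_int \<lceil>(1894/1000) * log 2 (real n)\<rceil>) \<and>
                 (\<forall>u\<in>nodes T. \<forall>v\<in>nodes T. dec (enc u) (enc v) = enc (nca u v))" by blast
  qed
  then show ?thesis using cardU tm by blast
qed


end
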